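(* Let $(n_1,\dots,n_K)$ be a multinomial random variable with parameters $n\ge1$ and $(p_1,\dots,p_K)$. For any $\delta>0$, $$\Pr\Big(\sum_{i=1}^Kp_i^2>\sum_{i=1}^K\Big(\frac{n_i}{n}\Big)^2+2\sqrt{\frac2n\ln\frac K\delta}\Big)<\delta.$$ *)

theory Defs
  imports "HOL-Probability.Probability"
begin

text \<open>Categorical distribution on the categories 0,...,K-1 with probabilities p 0, ..., p (K-1).
  (Only meaningful when the p i are nonnegative and sum to 1 over the K categories.)\<close>
definition categorical_pmf :: "nat \<Rightarrow> (nat \<Rightarrow> real) \<Rightarrow> nat pmf" where
  "categorical_pmf K p = embed_pmf (\<lambda>i. if i < K then p i else 0)"

fun iid_list_pmf :: "nat \<Rightarrow> 'a pmf \<Rightarrow> 'a list pmf" where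
  "iid_list_pmf 0 d = return_pmf []"
| "iid_list_pmf (Suc n) d = bind_pmf d (\<lambda>x. map_pmf (Cons x) (iid_list_pmf n d))"

definition multinomial_pmf :: "nat \<Rightarrow> nat \<Rightarrow> (nat \<Rightarrow> real) \<Rightarrow> (nat \<Rightarrow> nat) pmf" where
  "multinomial_pmf n K p =
     map_pmf (\<lambda>xs i. length (filter (\<lambda>x. x = i) xs)) (iid_list_pmf n (categorical_pmf K p))"

end

theory Submission
  imports Defs
begin

lemma pmf_categorical:
  assumes "\<And>i. i < K \<Longrightarrow> p i \<ge> 0" and "(\<Sum>i<K. p i) = 1"
  shows "pmf (categorical_pmf K p) x = (if x < K then p x else 0)"
  unfolding categorical_pmf_def
proof (rule pmf_embed_pmf)
  show "\<And>x. 0 \<le> (if x < K then p x else 0)" using assms(1) by auto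
  have "(\<integral>\<^sup>+ x. ennreal (if x < K then p x else 0) \<partial>count_space UNIV)
      = (\<Sum>x<K. ennreal (if x < K then p x else 0))"
    by (rule nn_integral_count_space') auto
  also have "\<dots> = (\<Sum>x<K. ennreal (p x))" by simp
  also have "\<dots> = ennreal (\<Sum>x<K. p x)"
    by (rule sum_ennreal) (use assms(1) in auto)
  finally show "(\<integral>\<^sup>+ x. ennreal (if x < K then p x else 0) \<partial>count_space UNIV) = 1"
    using assms(2) by simp
qed

lemma map_bool_bernoulli:
  "map_pmf P d = bernoulli_pmf (measure_pmf.prob d {x. P x})"
proof (rule pmf_eqI)
  fix b :: bool
  have c: "measure_pmf.prob d {x. \<not> P x} = 1 - measure_pmf.prob d {x. P x}"
    using measure_pmf.prob_compl[of "{x. P x}" d] by (simp add: Compl_eq_Diff_UNIV[symmetric] Collect_neg_eq)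
  show "pmf (map_pmf P d) b = pmf (bernoulli_pmf (measure_pmf.prob d {x. P x})) b"
    by (cases b) (auto simp: pmf_map vimage_def c)
qed

lemma iid_count_binomial:
  "map_pmf (\<lambda>xs. length (filter P xs)) (iid_list_pmf n d)
     = binomial_pmf n (measure_pmf.prob d {x. P x})"
proof (induction n)
  case 0
  then show ?case by (simp add: binomial_pmf_0)
next
  case (Suc n)
  let ?q = "measure_pmf.prob d {x. P x}"
  have q: "?q \<in> {0..1}" by auto
  have "map_pmf (\<lambda>xs. length (filter P xs)) (iid_list_pmf (Suc n) d)
      = bind_pmf d (\<lambda>x. map_pmf (\<lambda>k. (if P x then 1 else 0) + k)
            (map_pmf (\<lambda>xs. length (filter P xs)) (iid_list_pmf n d)))"
    by (simp add: map_bind_pmf pmf.map_comp o_def) (intro bind_pmf_cong refl map_pmf_cong; simp)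
  also have "\<dots> = bind_pmf d (\<lambda>x. map_pmf (\<lambda>k. (if P x then 1 else 0) + k) (binomial_pmf n ?q))"
    using Suc by simp
  also have "\<dots> = bind_pmf (map_pmf P d) (\<lambda>b. map_pmf (\<lambda>k. (if b then 1 else 0) + k) (binomial_pmf n ?q))"
    by (simp add: bind_map_pmf)
  also have "\<dots> = binomial_pmf (Suc n) ?q"
    unfolding binomial_pmf_Suc[OF q] map_bool_bernoulli
    by (simp add: map_pmf_def)
  finally show ?case .
qed

lemma set_iid_length: "xs \<in> set_pmf (iid_list_pmf n d) \<Longrightarrow> length xs = n"
  by (induction n arbitrary: xs) auto

lemma sum_counts_le:
  fixes K :: nat and xs :: "nat list"
  shows "(\<Sum>i<K. length (filter (\<lambda>x. x = i) xs)) \<le> length xs"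
proof (induction xs)
  case Nil
  then show ?case by simp
next
  case (Cons a xs)
  have "(\<Sum>i<K. length (filter (\<lambda>x. x = i) (a # xs)))
      = (\<Sum>i<K. (if a = i then 1 else 0) + length (filter (\<lambda>x. x = i) xs))"
    by (intro sum.cong) auto
  also have "\<dots> = (\<Sum>i<K. (if a = i then 1 else 0)) + (\<Sum>i<K. length (filter (\<lambda>x. x = i) xs))"
    by (simp add: sum.distrib)
  also have "(\<Sum>i<K. (if a = i then 1 else 0::nat)) \<le> 1"
    by (induction K) auto
  finally show ?case using Cons by simp
qed

lemma multinomial_marginal:
  assumes "\<And>i. i < K \<Longrightarrow> p i \<ge> 0" and "(\<Sum>i<K. p i) = 1" and "i < K"
  shows "map_pmf (\<lambda>c. c i) (multinomial_pmf n K p) = binomial_pmf n (p i)"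
proof -
  have "measure_pmf.prob (categorical_pmf K p) {x. x = i} = p i"
    using pmf_categorical[OF assms(1,2)] assms(3) by (simp add: measure_pmf_single)
  then show ?thesis
    unfolding multinomial_pmf_def pmf.map_comp o_def
    using iid_count_binomial[of "\<lambda>x. x = i" n "categorical_pmf K p"] by simp
qed

lemma support_sum:
  assumes "c \<in> set_pmf (multinomial_pmf n K p)"
  shows "(\<Sum>i<K. c i) \<le> n"
  using assms sum_counts_le set_iid_length unfolding multinomial_pmf_def by fastforce

lemma deterministic:
  fixes q p :: "nat \<Rightarrow> real"
  assumes "\<And>i. i < K \<Longrightarrow> p i \<ge> 0" and "(\<Sum>i<K. p i) = 1"
    and "\<And>i. i < K \<Longrightarrow> q i \<ge> 0" and "(\<Sum>i<K. q i) \<le> 1"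
    and "\<epsilon> \<ge> 0"
    and "(\<Sum>i<K. (p i)\<^sup>2) > (\<Sum>i<K. (q i)\<^sup>2) + 2 * \<epsilon>"
  shows "\<exists>i<K. q i < p i - \<epsilon>"
proof (rule ccontr)
  assume "\<not> ?thesis"
  then have h: "\<And>i. i < K \<Longrightarrow> p i - q i \<le> \<epsilon>" by force
  have "(\<Sum>i<K. (p i)\<^sup>2) - (\<Sum>i<K. (q i)\<^sup>2) = (\<Sum>i<K. (p i - q i) * (p i + q i))"
    by (simp add: sum_subtractf[symmetric] power2_eq_square algebra_simps)
  also have "\<dots> \<le> (\<Sum>i<K. \<epsilon> * (p i + q i))"
    using h assms(1,3) by (intro sum_mono mult_right_mono) auto
  also have "\<dots> = \<epsilon> * (1 + (\<Sum>i<K. q i))"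
    using assms(2) by (simp add: sum_distrib_left[symmetric] sum.distrib)
  also have "\<dots> \<le> \<epsilon> * 2"
    using assms(4,5) by (intro mult_left_mono) auto
  finally show False using assms(6) by simp
qed

theorem lemma8:
  fixes n K :: nat and p :: "nat \<Rightarrow> real" and \<delta> :: real
  assumes "n \<ge> 1"
    and "\<And>i. i < K \<Longrightarrow> p i \<ge> 0"
    and "(\<Sum>i<K. p i) = 1"
    and "\<delta> > 0"
  shows "measure_pmf.prob (multinomial_pmf n K p)
           {c. (\<Sum>i<K. (p i)\<^sup>2) >
               (\<Sum>i<K. (real (c i) / real n)\<^sup>2) + 2 * sqrt (2 / real n * ln (real K / \<delta>))}
         < \<delta>"
proof (cases "\<delta> > 1")
  case True
  then show ?thesis using measure_pmf.prob_le_1 by (meson le_less_trans)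
next
  case False
  define M where "M = multinomial_pmf n K p"
  define \<epsilon> where "\<epsilon> = sqrt (2 / real n * ln (real K / \<delta>))"
  define E where "E = {c. (\<Sum>i<K. (p i)\<^sup>2) > (\<Sum>i<K. (real (c i) / real n)\<^sup>2) + 2 * \<epsilon>}"
  define A where "A = (\<lambda>i. {c. real (c i) / real n < p i - \<epsilon>})"
  have K: "K \<ge> 1" using assms(3) by (cases K) auto
  have dK: "\<delta> \<le> real K" using False K by linarith
  have lnpos: "ln (real K / \<delta>) \<ge> 0" using dK assms(4) by simp
  have eps: "\<epsilon> \<ge> 0" unfolding \<epsilon>_def using lnpos by simp
  have sub: "E \<inter> set_pmf M \<subseteq> (\<Union>i\<in>{..<K}. A i)"
  proof
    fix c assume c: "c \<in> E \<inter> set_pmf M"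
    have s: "(\<Sum>i<K. real (c i) / real n) \<le> 1"
    proof -
      have "(\<Sum>i<K. real (c i) / real n) = real (\<Sum>i<K. c i) / real n"
        by (simp add: sum_divide_distrib)
      also have "\<dots> \<le> 1" using support_sum[of c n K p] c assms(1) unfolding M_def by (simp del: of_nat_sum)
      finally show ?thesis .
    qed
    from deterministic[OF assms(2,3) _ s eps] c
    show "c \<in> (\<Union>i\<in>{..<K}. A i)" unfolding E_def A_def by auto
  qed
  have "measure_pmf.prob M E = measure_pmf.prob M (E \<inter> set_pmf M)"
    by (simp add: measure_Int_set_pmf)
  also have "\<dots> \<le> measure_pmf.prob M (\<Union>i\<in>{..<K}. A i)"
    using sub by (intro measure_pmf.finite_measure_mono) auto
  also have "\<dots> \<le> (\<Sum>i<K. measure_pmf.prob M (A i))"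
    by (intro measure_pmf.finite_measure_subadditive_finite) auto
  also have "\<dots> = (\<Sum>i<K. measure_pmf.prob (binomial_pmf n (p i)) {x. real x / real n < p i - \<epsilon>})"
  proof (intro sum.cong refl)
    fix i assume i: "i \<in> {..<K}"
    show "measure_pmf.prob M (A i) = measure_pmf.prob (binomial_pmf n (p i)) {x. real x / real n < p i - \<epsilon>}"
      using i by (simp add: M_def A_def multinomial_marginal[OF assms(2,3), symmetric] measure_map_pmf vimage_def)
  qed
  also have "\<dots> < \<delta>"
  proof (cases "K = 1 \<and> \<delta> = 1")
    case True
    then have p0: "p 0 = 1" using assms(3) by simp
    have e0: "\<epsilon> = 0" using True unfolding \<epsilon>_def by simp
    have "measure_pmf.prob (binomial_pmf n 1) {x. real x / real n < 1}
        = measure_pmf.prob (binomial_pmf n 1) ({x. real x / real n < 1} \<inter> set_pmf (binomial_pmf n 1))"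
      by (rule measure_Int_set_pmf[symmetric])
    also have "\<dots> = 0" using assms(1) by simp
    finally show ?thesis using True p0 e0 assms(4) by simp
  next
    case False
    then have dK': "\<delta> < real K" using dK K \<open>\<not> \<delta> > 1\<close> by auto
    have bnd: "measure_pmf.prob (binomial_pmf n (p i)) {x. real x / real n < p i - \<epsilon>} \<le> (\<delta> / K) ^ 4"
      if i: "i < K" for i
    proof -
      have pi1: "p i \<le> 1"
        using member_le_sum[of i "{..<K}" p] assms(2,3) i by auto
      interpret binomial_distribution n "p i"
        by unfold_locales (use pi1 assms(2) i in auto)
      have "measure_pmf.prob (binomial_pmf n (p i)) {x. real x / real n < p i - \<epsilon>}
          \<le> measure_pmf.prob (binomial_pmf n (p i)) {x. real x / real n \<le> p i - \<epsilon>}"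
        by (intro measure_pmf.finite_measure_mono) auto
      also have "\<dots> \<le> exp (real_of_int (- 2 * int n) * \<epsilon>\<^sup>2)"
        using prob_le'[of \<epsilon>] assms(1) eps by simp
      also have "real_of_int (- 2 * int n) * \<epsilon>\<^sup>2 = - 4 * ln (real K / \<delta>)"
        unfolding \<epsilon>_def using lnpos assms(1) by simp
      also have "exp (- 4 * ln (real K / \<delta>)) = (\<delta> / K) ^ 4"
      proof -
        have "exp (- 4 * ln (real K / \<delta>)) = inverse (exp (ln (real K / \<delta>)) ^ 4)"
          by (simp add: exp_minus exp_of_nat_mult[symmetric])
        also have "\<dots> = (\<delta> / K) ^ 4" using assms(4) K by (simp add: power_inverse[symmetric] inverse_divide)
        finally show ?thesis .
      qed
      finally show ?thesis .
    qed
    have "(\<Sum>i<K. measure_pmf.prob (binomial_pmf n (p i)) {x. real x / real n < p i - \<epsilon>})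
        \<le> (\<Sum>i<K. (\<delta> / K) ^ 4)"
      using bnd by (intro sum_mono) auto
    also have "\<dots> = \<delta> * (\<delta> / K) ^ 3"
      using K by (simp add: power_Suc field_simps eval_nat_numeral)
    also have "\<dots> < \<delta> * 1"
      using dK' assms(4) K by (intro mult_strict_left_mono) (auto simp: power_less_one_iff)
    finally show ?thesis by simp
  qed
  finally show ?thesis unfolding M_def E_def \<epsilon>_def .
qed

end
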